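(* Let $D\subset\mathbb{C}$ be a closed disk centered at the origin. If $D$ is sufficiently small (i.e. its radius is sufficiently small), then $$R\Big[z^2, \frac{\overline z}{1+\overline z}; D\Big]=C(D).$$
   Context: For a closed disk $D\subset\mathbb{C}$, $C(D)$ is the algebra of complex-valued continuous functions on $D$ with the supremum norm. For continuous functions $f,g$ on $D$, $R[f,g;D]$ denotes the uniform closure on $D$ of the functions of the form $z\mapsto P(f(z),g(z))/Q(f(z),g(z))$, where $P,Q$ are polynomials in two complex variables and $Q(f(z),g(z))\neq 0$ for all $z\in D$ (i.e. rational functions in the variables $f$ and $g$ without poles on $\{(f(z),g(z)):z\in D\}$). Here $f(z)=z^2$ and $g(z)=\overline z/(1+\overline z)$. *)

theory Defs
  imports "HOL-Analysis.Analysis"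
begin

definition poly2 :: "(complex \<Rightarrow> complex \<Rightarrow> complex) set" where
  "poly2 = {(\<lambda>u v. \<Sum>i\<le>n. \<Sum>j\<le>n. c i j * u ^ i * v ^ j) | (c :: nat \<Rightarrow> nat \<Rightarrow> complex) n. True}"

definition rat_fun2 :: "(complex \<Rightarrow> complex) \<Rightarrow> (complex \<Rightarrow> complex) \<Rightarrow> complex set
    \<Rightarrow> (complex \<Rightarrow> complex) set" where
  "rat_fun2 f g D = {h. \<exists>P\<in>poly2. \<exists>Q\<in>poly2. (\<forall>z\<in>D. Q (f z) (g z) \<noteq> 0) \<and>
       (\<forall>z\<in>D. h z = P (f z) (g z) / Q (f z) (g z))}"

definition R_alg :: "(complex \<Rightarrow> complex) \<Rightarrow> (complex \<Rightarrow> complex) \<Rightarrow> complex set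
    \<Rightarrow> (complex \<Rightarrow> complex) set" where
  "R_alg f g D = {h. \<forall>e>0. \<exists>k\<in>rat_fun2 f g D. \<forall>z\<in>D. norm (h z - k z) < e}"

definition C_alg :: "complex set \<Rightarrow> (complex \<Rightarrow> complex) set" where
  "C_alg D = {h. continuous_on D h}"

end

theory Submission
  imports Defs
begin


lemma sum_if_le:
  fixes X :: "nat \<Rightarrow> 'b::comm_monoid_add"
  assumes "n \<le> N"
  shows "(\<Sum>i\<le>N. if i \<le> n then X i else 0) = (\<Sum>i\<le>n. X i)"
proof -
  have "sum X {i\<in>{..N}. i \<le> n} = (\<Sum>i\<le>N. if i \<le> n then X i else 0)"
    by (rule sum.inter_filter) simp
  then have "(\<Sum>i\<le>N. if i \<le> n then X i else 0) = sum X {i\<in>{..N}. i \<le> n}" by simp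
  also have "{i\<in>{..N}. i \<le> n} = {..n}" using assms by auto
  finally show ?thesis by simp
qed

lemma poly2_pad:
  fixes c :: "nat \<Rightarrow> nat \<Rightarrow> complex" and u v :: complex
  assumes "n \<le> N"
  shows "(\<Sum>i\<le>N. \<Sum>j\<le>N. (if i \<le> n \<and> j \<le> n then c i j else 0) * u ^ i * v ^ j)
       = (\<Sum>i\<le>n. \<Sum>j\<le>n. c i j * u ^ i * v ^ j)"
proof -
  have "(\<Sum>i\<le>N. \<Sum>j\<le>N. (if i \<le> n \<and> j \<le> n then c i j else 0) * u ^ i * v ^ j)
     = (\<Sum>i\<le>N. if i \<le> n then (\<Sum>j\<le>N. if j \<le> n then c i j * u ^ i * v ^ j else 0) else 0)"
    by (rule sum.cong[OF refl]) (auto intro!: sum.cong)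
  also have "\<dots> = (\<Sum>i\<le>N. if i \<le> n then (\<Sum>j\<le>n. c i j * u ^ i * v ^ j) else 0)"
    by (simp only: sum_if_le[OF assms])
  also have "\<dots> = (\<Sum>i\<le>n. \<Sum>j\<le>n. c i j * u ^ i * v ^ j)"
    by (rule sum_if_le[OF assms])
  finally show ?thesis .
qed

lemma poly2_add:
  assumes "P \<in> poly2" "Q \<in> poly2"
  shows "(\<lambda>u v. P u v + Q u v) \<in> poly2"
proof -
  obtain c n where P: "P = (\<lambda>u v. \<Sum>i\<le>n. \<Sum>j\<le>n. c i j * u ^ i * v ^ j)"
    using assms(1) unfolding poly2_def by blast
  obtain d m where Q: "Q = (\<lambda>u v. \<Sum>i\<le>m. \<Sum>j\<le>m. d i j * u ^ i * v ^ j)"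
    using assms(2) unfolding poly2_def by blast
  define e where "e = (\<lambda>i j. (if i \<le> n \<and> j \<le> n then c i j else 0) + (if i \<le> m \<and> j \<le> m then d i j else 0))"
  have "(\<lambda>u v. P u v + Q u v) = (\<lambda>u v. \<Sum>i\<le>n+m. \<Sum>j\<le>n+m. e i j * u ^ i * v ^ j)"
  proof (intro ext)
    fix u v :: complex
    have "(\<Sum>i\<le>n+m. \<Sum>j\<le>n+m. e i j * u ^ i * v ^ j)
      = (\<Sum>i\<le>n+m. \<Sum>j\<le>n+m. (if i \<le> n \<and> j \<le> n then c i j else 0) * u ^ i * v ^ j)
       + (\<Sum>i\<le>n+m. \<Sum>j\<le>n+m. (if i \<le> m \<and> j \<le> m then d i j else 0) * u ^ i * v ^ j)"
      by (simp add: e_def distrib_right sum.distrib)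
    also have "\<dots> = P u v + Q u v"
      unfolding P Q by (subst poly2_pad, simp)+ (rule refl)
    finally show "P u v + Q u v = (\<Sum>i\<le>n+m. \<Sum>j\<le>n+m. e i j * u ^ i * v ^ j)" by simp
  qed
  then show ?thesis unfolding poly2_def by blast
qed

lemma poly2_zero: "(\<lambda>u v. 0) \<in> poly2"
proof -
  have "(\<lambda>u v. 0::complex) = (\<lambda>u v. \<Sum>i\<le>0. \<Sum>j\<le>0. (\<lambda>i j. 0) i j * u ^ i * v ^ j)" by simp
  then show ?thesis unfolding poly2_def by (intro CollectI exI[of _ "\<lambda>i j. 0"] exI[of _ 0]) simp
qed

lemma poly2_mono: "(\<lambda>u v. a * u ^ p * v ^ q) \<in> poly2"
proof -
  define c where "c = (\<lambda>i j. if i = p \<and> j = q then a else (0::complex))"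
  have "(\<lambda>u v. a * u ^ p * v ^ q) = (\<lambda>u v. \<Sum>i\<le>max p q. \<Sum>j\<le>max p q. c i j * u ^ i * v ^ j)"
  proof (intro ext)
    fix u v :: complex
    have pw: "\<And>i j. c i j * u ^ i * v ^ j = (if i = p then (if j = q then a * u ^ p * v ^ q else 0) else 0)"
      by (simp add: c_def)
    have inner: "\<And>i. (\<Sum>j\<le>max p q. if i = p then (if j = q then a * u ^ p * v ^ q else 0) else 0)
        = (if i = p then a * u ^ p * v ^ q else 0)"
      by (case_tac "i = p") simp_all
    have "(\<Sum>i\<le>max p q. \<Sum>j\<le>max p q. c i j * u ^ i * v ^ j)
       = (\<Sum>i\<le>max p q. if i = p then a * u ^ p * v ^ q else 0)"
      unfolding pw inner by (rule refl)
    also have "\<dots> = a * u ^ p * v ^ q" by simp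
    finally show "a * u ^ p * v ^ q = (\<Sum>i\<le>max p q. \<Sum>j\<le>max p q. c i j * u ^ i * v ^ j)" by simp
  qed
  then show ?thesis unfolding poly2_def by blast
qed

lemma poly2_sum:
  assumes "finite I" "\<And>i. i \<in> I \<Longrightarrow> F i \<in> poly2"
  shows "(\<lambda>u v. \<Sum>i\<in>I. F i u v) \<in> poly2"
  using assms
proof (induction I rule: finite_induct)
  case empty
  then show ?case using poly2_zero by simp
next
  case (insert x I)
  then show ?case using poly2_add[of "F x" "\<lambda>u v. \<Sum>i\<in>I. F i u v"] by simp
qed

lemma poly2_mult:
  assumes "P \<in> poly2" "Q \<in> poly2"
  shows "(\<lambda>u v. P u v * Q u v) \<in> poly2"
proof -
  obtain c n where P: "P = (\<lambda>u v. \<Sum>i\<le>n. \<Sum>j\<le>n. c i j * u ^ i * v ^ j)"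
    using assms(1) unfolding poly2_def by blast
  obtain d m where Q: "Q = (\<lambda>u v. \<Sum>i\<le>m. \<Sum>j\<le>m. d i j * u ^ i * v ^ j)"
    using assms(2) unfolding poly2_def by blast
  have eq: "(\<lambda>u v. P u v * Q u v) = (\<lambda>u v. \<Sum>i\<le>n. \<Sum>k\<le>m. \<Sum>j\<le>n. \<Sum>l\<le>m.
       (c i j * d k l) * u ^ (i + k) * v ^ (j + l))"
    unfolding P Q sum_product by (intro ext sum.cong refl) (simp add: power_add mult_ac)
  show ?thesis unfolding eq
    by (intro poly2_sum poly2_mono finite_atMost)
qed


lemma poly2_const: "(\<lambda>u v. a) \<in> poly2"
  using poly2_mono[of a 0 0] by simp

lemma poly2_u: "(\<lambda>u v. u) \<in> poly2"
  using poly2_mono[of 1 1 0] by simp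

lemma poly2_v: "(\<lambda>u v. v) \<in> poly2"
  using poly2_mono[of 1 0 1] by simp

lemma poly2_diff:
  assumes "P \<in> poly2" "Q \<in> poly2"
  shows "(\<lambda>u v. P u v - Q u v) \<in> poly2"
proof -
  have "(\<lambda>u v. (\<lambda>u v. -1) u v * Q u v) \<in> poly2"
    by (rule poly2_mult[OF poly2_const assms(2)])
  then have "(\<lambda>u v. P u v + (\<lambda>u v. -1) u v * Q u v) \<in> poly2"
    by (rule poly2_add[OF assms(1)])
  then show ?thesis by simp
qed

lemma rat_fun2_D:
  assumes "k \<in> rat_fun2 f g D"
  shows "\<exists>P\<in>poly2. \<exists>Q\<in>poly2. (\<forall>z\<in>D. Q (f z) (g z) \<noteq> 0) \<and>
       (\<forall>z\<in>D. k z = P (f z) (g z) / Q (f z) (g z))"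
  using assms unfolding rat_fun2_def by (rule CollectD)

lemma rat_fun2_E:
  assumes "k \<in> rat_fun2 f g D"
  obtains P Q where "P \<in> poly2" "Q \<in> poly2" "\<And>z. z \<in> D \<Longrightarrow> Q (f z) (g z) \<noteq> 0"
    "\<And>z. z \<in> D \<Longrightarrow> k z = P (f z) (g z) / Q (f z) (g z)"
proof -
  from assms have "\<exists>P\<in>poly2. \<exists>Q\<in>poly2. (\<forall>z\<in>D. Q (f z) (g z) \<noteq> 0) \<and>
       (\<forall>z\<in>D. k z = P (f z) (g z) / Q (f z) (g z))" unfolding rat_fun2_def by (rule CollectD)
  then obtain P Q where "P \<in> poly2" "Q \<in> poly2" "\<forall>z\<in>D. Q (f z) (g z) \<noteq> 0"
       "\<forall>z\<in>D. k z = P (f z) (g z) / Q (f z) (g z)" by (elim bexE conjE)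
  then show ?thesis using that by blast
qed

lemma poly2_E:
  assumes "P \<in> poly2"
  obtains c n where "P = (\<lambda>u v. \<Sum>i\<le>n. \<Sum>j\<le>n. c i j * u ^ i * v ^ j)"
proof -
  from assms have "\<exists>c n. P = (\<lambda>u v. \<Sum>i\<le>n. \<Sum>j\<le>n. c i j * u ^ i * v ^ j) \<and> True"
    unfolding poly2_def by (rule CollectD)
  then show ?thesis using that by blast
qed

lemma poly2_cont:
  assumes "P \<in> poly2" "continuous_on D f" "continuous_on D g"
  shows "continuous_on D (\<lambda>z. P (f z) (g z))"
proof -
  obtain c n where P: "P = (\<lambda>u v. \<Sum>i\<le>n. \<Sum>j\<le>n. c i j * u ^ i * v ^ j)"
    using assms(1) by (rule poly2_E)
  have "\<And>i j. continuous_on D (\<lambda>z. c i j * f z ^ i * g z ^ j)"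
    by (intro continuous_on_mult continuous_on_const continuous_on_power assms(2,3))
  then have "continuous_on D (\<lambda>z. \<Sum>i\<le>n. \<Sum>j\<le>n. c i j * f z ^ i * g z ^ j)"
    by (intro continuous_on_sum)
  then show ?thesis unfolding P .
qed

lemma rat_cont:
  assumes "k \<in> rat_fun2 f g D" "continuous_on D f" "continuous_on D g"
  shows "continuous_on D k"
proof -
  obtain P Q where PQ: "P \<in> poly2" "Q \<in> poly2" "\<forall>z\<in>D. Q (f z) (g z) \<noteq> 0"
    "\<forall>z\<in>D. k z = P (f z) (g z) / Q (f z) (g z)"
    using rat_fun2_D[OF assms(1)] by (elim bexE conjE)
  have c1: "continuous_on D (\<lambda>z. P (f z) (g z))" by (rule poly2_cont[OF PQ(1) assms(2,3)])
  have c2: "continuous_on D (\<lambda>z. Q (f z) (g z))" by (rule poly2_cont[OF PQ(2) assms(2,3)])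
  have "continuous_on D (\<lambda>z. P (f z) (g z) / Q (f z) (g z))"
    using PQ(3) by (intro continuous_on_divide[OF c1 c2]) blast
  then show ?thesis by (rule continuous_on_eq) (use PQ(4) in simp)
qed

lemma rat_fun2_I:
  assumes "P \<in> poly2" "Q \<in> poly2" "\<forall>z\<in>D. Q (f z) (g z) \<noteq> 0"
    "\<forall>z\<in>D. k z = P (f z) (g z) / Q (f z) (g z)"
  shows "k \<in> rat_fun2 f g D"
  unfolding rat_fun2_def mem_Collect_eq
proof (rule bexI[where x=P])
  show "\<exists>Qa\<in>poly2. (\<forall>z\<in>D. Qa (f z) (g z) \<noteq> 0) \<and> (\<forall>z\<in>D. k z = P (f z) (g z) / Qa (f z) (g z))"
  proof (rule bexI[where x=Q])
    show "(\<forall>z\<in>D. Q (f z) (g z) \<noteq> 0) \<and> (\<forall>z\<in>D. k z = P (f z) (g z) / Q (f z) (g z))"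
      using assms(3,4) by (rule conjI)
  qed (rule assms(2))
qed (rule assms(1))

lemma rat_add:
  assumes "k1 \<in> rat_fun2 f g D" "k2 \<in> rat_fun2 f g D"
  shows "(\<lambda>z. k1 z + k2 z) \<in> rat_fun2 f g D"
proof -
  obtain P1 Q1 where 1: "P1 \<in> poly2" "Q1 \<in> poly2" "\<forall>z\<in>D. Q1 (f z) (g z) \<noteq> 0"
    "\<forall>z\<in>D. k1 z = P1 (f z) (g z) / Q1 (f z) (g z)"
    using rat_fun2_D[OF assms(1)] by (elim bexE conjE)
  obtain P2 Q2 where 2: "P2 \<in> poly2" "Q2 \<in> poly2" "\<forall>z\<in>D. Q2 (f z) (g z) \<noteq> 0"
    "\<forall>z\<in>D. k2 z = P2 (f z) (g z) / Q2 (f z) (g z)"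
    using rat_fun2_D[OF assms(2)] by (elim bexE conjE)
  let ?P = "\<lambda>u v. P1 u v * Q2 u v + P2 u v * Q1 u v"
  let ?Q = "\<lambda>u v. Q1 u v * Q2 u v"
  have "?P \<in> poly2"
    by (rule poly2_add[OF poly2_mult[OF 1(1) 2(2)] poly2_mult[OF 2(1) 1(2)]])
  moreover have "?Q \<in> poly2" by (rule poly2_mult[OF 1(2) 2(2)])
  moreover have "\<forall>z\<in>D. ?Q (f z) (g z) \<noteq> 0" using 1 2 by simp
  moreover have "\<forall>z\<in>D. k1 z + k2 z = ?P (f z) (g z) / ?Q (f z) (g z)"
    using 1 2 by (simp add: add_frac_eq)
  ultimately show ?thesis by (rule rat_fun2_I)
qed

lemma rat_mult:
  assumes "k1 \<in> rat_fun2 f g D" "k2 \<in> rat_fun2 f g D"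
  shows "(\<lambda>z. k1 z * k2 z) \<in> rat_fun2 f g D"
proof -
  obtain P1 Q1 where 1: "P1 \<in> poly2" "Q1 \<in> poly2" "\<forall>z\<in>D. Q1 (f z) (g z) \<noteq> 0"
    "\<forall>z\<in>D. k1 z = P1 (f z) (g z) / Q1 (f z) (g z)"
    using rat_fun2_D[OF assms(1)] by (elim bexE conjE)
  obtain P2 Q2 where 2: "P2 \<in> poly2" "Q2 \<in> poly2" "\<forall>z\<in>D. Q2 (f z) (g z) \<noteq> 0"
    "\<forall>z\<in>D. k2 z = P2 (f z) (g z) / Q2 (f z) (g z)"
    using rat_fun2_D[OF assms(2)] by (elim bexE conjE)
  let ?P = "\<lambda>u v. P1 u v * P2 u v"
  let ?Q = "\<lambda>u v. Q1 u v * Q2 u v"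
  have "?P \<in> poly2" by (rule poly2_mult[OF 1(1) 2(1)])
  moreover have "?Q \<in> poly2" by (rule poly2_mult[OF 1(2) 2(2)])
  moreover have "\<forall>z\<in>D. ?Q (f z) (g z) \<noteq> 0" using 1 2 by simp
  moreover have "\<forall>z\<in>D. k1 z * k2 z = ?P (f z) (g z) / ?Q (f z) (g z)"
    using 1 2 by simp
  ultimately show ?thesis by (rule rat_fun2_I)
qed

lemma rat_const: "(\<lambda>z. a) \<in> rat_fun2 f g D"
proof -
  have a: "\<forall>z\<in>D. (\<lambda>z. a) z = (\<lambda>u v. a) (f z) (g z) / (\<lambda>u v. 1) (f z) (g z)" by simp
  have b: "\<forall>z\<in>D. (\<lambda>u v. 1::complex) (f z) (g z) \<noteq> 0" by simp
  show ?thesis by (rule rat_fun2_I[OF poly2_const[of a] poly2_const[of 1] b a])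
qed

lemma R_get:
  assumes "h \<in> R_alg f g D" "e > 0"
  shows "\<exists>k\<in>rat_fun2 f g D. \<forall>z\<in>D. norm (h z - k z) < e"
proof -
  have "\<forall>e>0. \<exists>k\<in>rat_fun2 f g D. \<forall>z\<in>D. norm (h z - k z) < e"
    using assms(1) unfolding R_alg_def by (rule CollectD)
  then show ?thesis using assms(2) by blast
qed

lemma R_I:
  assumes "\<And>e. e > 0 \<Longrightarrow> \<exists>k\<in>rat_fun2 f g D. \<forall>z\<in>D. norm (h z - k z) < e"
  shows "h \<in> R_alg f g D"
  unfolding R_alg_def using assms by (intro CollectI allI impI)

lemma rat_sub_R:
  assumes "k \<in> rat_fun2 f g D"
  shows "k \<in> R_alg f g D"
proof (rule R_I)
  fix e :: real assume "e > 0"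
  then have "\<forall>z\<in>D. norm (k z - k z) < e" by simp
  then show "\<exists>k'\<in>rat_fun2 f g D. \<forall>z\<in>D. norm (k z - k' z) < e"
    by (rule bexI[where x=k, OF _ assms])
qed

lemma R_closed:
  assumes "\<And>e. e > 0 \<Longrightarrow> \<exists>F\<in>R_alg f g D. \<forall>z\<in>D. norm (h z - F z) < e"
  shows "h \<in> R_alg f g D"
proof (rule R_I)
  fix e :: real assume e: "e > 0"
  have e2: "e/2 > 0" using e by simp
  obtain F where F: "F \<in> R_alg f g D" "\<forall>z\<in>D. norm (h z - F z) < e/2"
    using assms[OF e2] by blast
  obtain k where k: "k \<in> rat_fun2 f g D" "\<forall>z\<in>D. norm (F z - k z) < e/2"
    using R_get[OF F(1) e2] by blast
  have "\<forall>z\<in>D. norm (h z - k z) < e"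
  proof
    fix z assume z: "z \<in> D"
    have "norm (h z - k z) \<le> norm (h z - F z) + norm (F z - k z)"
      using norm_triangle_ineq[of "h z - F z" "F z - k z"] by simp
    then show "norm (h z - k z) < e" using F(2) k(2) z by force
  qed
  then show "\<exists>k\<in>rat_fun2 f g D. \<forall>z\<in>D. norm (h z - k z) < e" using k(1) by blast
qed

lemma tri3:
  fixes a b c d :: "'a::real_normed_vector"
  shows "norm (a - d) \<le> norm (a - b) + norm (b - c) + norm (d - c)"
proof -
  have "a - d = (a - b) + (b - c) + (c - d)" by simp
  then have "norm (a - d) \<le> norm ((a - b) + (b - c)) + norm (c - d)"
    by (metis norm_triangle_ineq)
  also have "\<dots> \<le> norm (a - b) + norm (b - c) + norm (c - d)"
    using norm_triangle_ineq[of "a-b" "b-c"] by simp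
  finally show ?thesis by (simp add: norm_minus_commute)
qed
lemma t2:
  fixes a c \<eta> B :: real
  assumes "0 \<le> a" "a < \<eta>" "0 \<le> c" "c \<le> B" "0 < B"
  shows "a * c < \<eta> * B"
proof -
  have "a * c \<le> a * B" using assms by (intro mult_left_mono) auto
  also have "\<dots> < \<eta> * B" using assms by (intro mult_strict_right_mono) auto
  finally show ?thesis .
qed

lemma R_cont:
  assumes "h \<in> R_alg f g D" "continuous_on D f" "continuous_on D g"
  shows "continuous_on D h"
  unfolding continuous_on_iff
proof (intro ballI allI impI)
  fix x e assume x: "x \<in> D" and e: "(e::real) > 0"
  have e3: "e/3 > 0" using e by simp
  obtain k where k: "k \<in> rat_fun2 f g D" "\<forall>z\<in>D. norm (h z - k z) < e/3"
    using R_get[OF assms(1) e3] by blast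
  have "continuous_on D k" using rat_cont[OF k(1) assms(2,3)] .
  then obtain d where d: "d > 0" "\<forall>x'\<in>D. dist x' x < d \<longrightarrow> dist (k x') (k x) < e/3"
    using x e3 continuous_on_iff[THEN iffD1, OF \<open>continuous_on D k\<close>] by meson
  show "\<exists>d>0. \<forall>x'\<in>D. dist x' x < d \<longrightarrow> dist (h x') (h x) < e"
  proof (intro exI[of _ d] conjI ballI impI d(1))
    fix x' assume x': "x' \<in> D" "dist x' x < d"
    have "dist (h x') (h x) \<le> norm (h x' - k x') + dist (k x') (k x) + norm (h x - k x)"
      unfolding dist_norm by (rule tri3)
    moreover have "norm (h x' - k x') < e/3" using k(2) x'(1) by blast
    moreover have "dist (k x') (k x) < e/3" using d(2) x'(1,2) by blast
    moreover have "norm (h x - k x) < e/3" using k(2) x by blast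
    ultimately show "dist (h x') (h x) < e" by linarith
  qed
qed

lemma cont_bounded:
  assumes "compact D" "continuous_on D h"
  obtains B where "B \<ge> 0" "\<And>z. z \<in> D \<Longrightarrow> norm (h z) \<le> B"
proof -
  have "bounded (h ` D)" using compact_continuous_image[OF assms(2,1)] compact_imp_bounded by blast
  then obtain B where B: "B > 0" "\<forall>x\<in>h ` D. norm x \<le> B" unfolding bounded_pos by blast
  show ?thesis
  proof (rule that[of B])
    show "B \<ge> 0" using B(1) by simp
    fix z assume "z \<in> D"
    then show "norm (h z) \<le> B" using B(2) by blast
  qed
qed

lemma R_add:
  assumes "h1 \<in> R_alg f g D" "h2 \<in> R_alg f g D"
  shows "(\<lambda>z. h1 z + h2 z) \<in> R_alg f g D"
proof (rule R_I)
  fix e :: real assume e: "e > 0"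
  have e2: "e/2 > 0" using e by simp
  obtain k1 where k1: "k1 \<in> rat_fun2 f g D" "\<forall>z\<in>D. norm (h1 z - k1 z) < e/2"
    using R_get[OF assms(1) e2] by blast
  obtain k2 where k2: "k2 \<in> rat_fun2 f g D" "\<forall>z\<in>D. norm (h2 z - k2 z) < e/2"
    using R_get[OF assms(2) e2] by blast
  have "\<forall>z\<in>D. norm ((h1 z + h2 z) - (k1 z + k2 z)) < e"
  proof
    fix z assume z: "z \<in> D"
    have eq: "(h1 z + h2 z) - (k1 z + k2 z) = (h1 z - k1 z) + (h2 z - k2 z)" by simp
    have "norm ((h1 z + h2 z) - (k1 z + k2 z)) \<le> norm (h1 z - k1 z) + norm (h2 z - k2 z)"
      unfolding eq by (rule norm_triangle_ineq)
    moreover have "norm (h1 z - k1 z) < e/2" using k1(2) z by blast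
    moreover have "norm (h2 z - k2 z) < e/2" using k2(2) z by blast
    ultimately show "norm ((h1 z + h2 z) - (k1 z + k2 z)) < e" by linarith
  qed
  then show "\<exists>k\<in>rat_fun2 f g D. \<forall>z\<in>D. norm (h1 z + h2 z - k z) < e"
    using rat_add[OF k1(1) k2(1)] by (intro bexI[of _ "\<lambda>z. k1 z + k2 z"]) auto
qed

lemma R_mult:
  assumes "h1 \<in> R_alg f g D" "h2 \<in> R_alg f g D"
    and cD: "compact D" and cf: "continuous_on D f" and cg: "continuous_on D g"
  shows "(\<lambda>z. h1 z * h2 z) \<in> R_alg f g D"
proof (rule R_I)
  fix e :: real assume e: "e > 0"
  obtain B1 where B1: "B1 \<ge> 0" "\<And>z. z \<in> D \<Longrightarrow> norm (h1 z) \<le> B1"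
    using cont_bounded[OF cD R_cont[OF assms(1) cf cg]] by blast
  obtain B2 where B2: "B2 \<ge> 0" "\<And>z. z \<in> D \<Longrightarrow> norm (h2 z) \<le> B2"
    using cont_bounded[OF cD R_cont[OF assms(2) cf cg]] by blast
  define \<eta> where "\<eta> = min 1 (e / (B1 + B2 + 1))"
  have pos: "B1 + B2 + 1 > 0" using B1 B2 by linarith
  have \<eta>1: "\<eta> > 0" "\<eta> \<le> 1" "\<eta> \<le> e / (B1 + B2 + 1)"
    using e pos by (auto simp: \<eta>_def)
  have "\<eta> * (B1 + B2 + 1) \<le> e / (B1 + B2 + 1) * (B1 + B2 + 1)"
    using \<eta>1(3) pos by (intro mult_right_mono) auto
  then have \<eta>: "\<eta> > 0" "\<eta> \<le> 1" "\<eta> * (B1 + B2 + 1) \<le> e" using \<eta>1 pos by auto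
  obtain k1 where k1: "k1 \<in> rat_fun2 f g D" "\<forall>z\<in>D. norm (h1 z - k1 z) < \<eta>"
    using R_get[OF assms(1)] \<eta> by blast
  obtain k2 where k2: "k2 \<in> rat_fun2 f g D" "\<forall>z\<in>D. norm (h2 z - k2 z) < \<eta>"
    using R_get[OF assms(2)] \<eta> by blast
  have "\<forall>z\<in>D. norm (h1 z * h2 z - k1 z * k2 z) < e"
  proof
    fix z assume z: "z \<in> D"
    have eq: "h1 z * h2 z - k1 z * k2 z = h1 z * (h2 z - k2 z) + (h1 z - k1 z) * k2 z"
      by (simp add: algebra_simps)
    have nk2a: "norm (k2 z) \<le> norm (h2 z) + norm (k2 z - h2 z)" by (rule norm_triangle_sub)
    have nk2b: "norm (k2 z - h2 z) = norm (h2 z - k2 z)" by (rule norm_minus_commute)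
    have nk2c: "norm (h2 z - k2 z) < \<eta>" using k2(2) z by blast
    have nk2: "norm (k2 z) \<le> B2 + 1"
      using B2(2)[OF z] nk2a nk2b nk2c \<eta>(2) by linarith
    have a: "norm (h1 z * (h2 z - k2 z)) \<le> B1 * \<eta>"
      unfolding norm_mult using B1 z k2(2) by (intro mult_mono) auto
    have b: "norm ((h1 z - k1 z) * k2 z) < \<eta> * (B2 + 1)"
      unfolding norm_mult using k1(2) z nk2 B2(1) by (intro t2) auto
    have "norm (h1 z * h2 z - k1 z * k2 z) \<le> norm (h1 z * (h2 z - k2 z)) + norm ((h1 z - k1 z) * k2 z)"
      unfolding eq by (rule norm_triangle_ineq)
    also have "\<dots> < B1 * \<eta> + \<eta> * (B2 + 1)" using a b by linarith
    also have "\<dots> = \<eta> * (B1 + B2 + 1)" by (simp add: algebra_simps)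
    finally show "norm (h1 z * h2 z - k1 z * k2 z) < e" using \<eta>(3) by linarith
  qed
  then show "\<exists>k\<in>rat_fun2 f g D. \<forall>z\<in>D. norm (h1 z * h2 z - k z) < e"
    using rat_mult[OF k1(1) k2(1)] by (intro bexI[of _ "\<lambda>z. k1 z * k2 z"]) auto
qed

lemma R_rpf:
  fixes u :: "complex \<Rightarrow> 'a::real_normed_vector"
  assumes "real_polynomial_function p"
    and lin: "\<And>l. bounded_linear l \<Longrightarrow> (\<lambda>z. complex_of_real (l (u z))) \<in> R_alg f g D"
    and cD: "compact D" and cf: "continuous_on D f" and cg: "continuous_on D g"
  shows "(\<lambda>z. complex_of_real (p (u z))) \<in> R_alg f g D"
  using assms(1)
proof (induction p rule: real_polynomial_function.induct)
  case (linear l)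
  then show ?case using lin by blast
next
  case (const c)
  then show ?case using rat_sub_R[OF rat_const] by simp
next
  case (add p1 p2)
  then show ?case using R_add[OF add.IH] by simp
next
  case (mult p1 p2)
  then show ?case using R_mult[OF mult.IH cD cf cg] by simp
qed



lemma den_nz:
  assumes "z \<in> cball 0 r" "r \<le> 1/2"
  shows "1 + cnj z \<noteq> 0"
proof
  assume "1 + cnj z = 0"
  then have "cnj z = -1" by (simp add: add_eq_0_iff)
  then have "z = -1" by (metis complex_cnj_cnj complex_cnj_minus complex_cnj_one)
  then have "cmod z = 1" by simp
  then show False using assms by auto
qed

lemma real_key:
  fixes t e Q :: real
  assumes t: "0 \<le> t" "t \<le> 1/2" and e: "0 < e"
    and Q: "\<bar>1 / max (t^2) ((e/2)^2) - Q\<bar> < e/2"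
  shows "t * \<bar>1 - t^2 * Q\<bar> < e"
proof -
  define s where "s = e/2"
  define \<psi> where "\<psi> = 1 / max (t^2) (s^2)"
  have s: "s > 0" using e by (simp add: s_def)
  have Q': "\<bar>\<psi> - Q\<bar> < e/2" using Q by (simp add: \<psi>_def s_def)
  have "\<bar>1 - t^2 * Q\<bar> \<le> \<bar>1 - t^2 * \<psi>\<bar> + t^2 * \<bar>\<psi> - Q\<bar>"
  proof -
    have eq: "1 - t^2 * Q = (1 - t^2 * \<psi>) + t^2 * (\<psi> - Q)" by (simp add: algebra_simps)
    have "\<bar>(1 - t^2 * \<psi>) + t^2 * (\<psi> - Q)\<bar> \<le> \<bar>1 - t^2 * \<psi>\<bar> + \<bar>t^2 * (\<psi> - Q)\<bar>"
      by (rule abs_triangle_ineq)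
    also have "\<bar>t^2 * (\<psi> - Q)\<bar> = t^2 * \<bar>\<psi> - Q\<bar>" by (simp add: abs_mult)
    finally show ?thesis unfolding eq .
  qed
  then have "t * \<bar>1 - t^2 * Q\<bar> \<le> t * (\<bar>1 - t^2 * \<psi>\<bar> + t^2 * \<bar>\<psi> - Q\<bar>)"
    by (rule mult_left_mono) (use t in simp)
  also have "\<dots> = t * \<bar>1 - t^2 * \<psi>\<bar> + t^3 * \<bar>\<psi> - Q\<bar>"
    by (simp add: algebra_simps power3_eq_cube power2_eq_square)
  finally have "t * \<bar>1 - t^2 * Q\<bar> \<le> t * \<bar>1 - t^2 * \<psi>\<bar> + t^3 * \<bar>\<psi> - Q\<bar>" .
  moreover have "t^3 * \<bar>\<psi> - Q\<bar> \<le> e/2 * (1/8)"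
  proof -
    have "t^3 \<le> (1/2)^3" using t by (intro power_mono) auto
    then have "t^3 \<le> 1/8" by (simp add: power3_eq_cube)
    then have "t^3 * \<bar>\<psi> - Q\<bar> \<le> (1/8) * (e/2)"
      by (rule mult_mono) (use Q' in auto)
    then show ?thesis by simp
  qed
  moreover have "t * \<bar>1 - t^2 * \<psi>\<bar> < e/2"
  proof (cases "t \<ge> s")
    case True
    then have "t^2 \<ge> s^2" using s by (intro power_mono) auto
    then have "\<psi> = 1 / t^2" by (simp add: \<psi>_def max_def)
    moreover have "t > 0" using True s by linarith
    ultimately show ?thesis using e by simp
  next
    case False
    then have "t^2 \<le> s^2" using t by (intro power_mono) auto
    then have "\<psi> = 1 / s^2" by (simp add: \<psi>_def max_def)
    then have "t^2 * \<psi> = t^2 / s^2" by simp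
    moreover have "t^2 / s^2 \<le> 1" using \<open>t^2 \<le> s^2\<close> s by simp
    moreover have "t^2 / s^2 \<ge> 0" by simp
    ultimately have "\<bar>1 - t^2 * \<psi>\<bar> \<le> 1" by linarith
    then have "t * \<bar>1 - t^2 * \<psi>\<bar> \<le> t" using t by (metis mult_left_mono mult.right_neutral)
    then show ?thesis using False s_def by linarith
  qed
  ultimately show ?thesis using e by linarith
qed

context
  fixes r :: real
  assumes r: "0 < r" "r \<le> 1/2"
begin

abbreviation "F0 \<equiv> (\<lambda>z::complex. z ^ 2)"
abbreviation "G0 \<equiv> (\<lambda>z::complex. cnj z / (1 + cnj z))"
abbreviation "D0 \<equiv> cball (0::complex) r"
abbreviation "RR \<equiv> R_alg F0 G0 D0"

lemma cF: "continuous_on D0 F0" by (intro continuous_intros)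
lemma cG: "continuous_on D0 G0"
  using den_nz r by (intro continuous_intros) auto
lemma cD: "compact D0" by simp

lemma RR_add: "h1 \<in> RR \<Longrightarrow> h2 \<in> RR \<Longrightarrow> (\<lambda>z. h1 z + h2 z) \<in> RR"
  by (rule R_add)
lemma RR_mult: "h1 \<in> RR \<Longrightarrow> h2 \<in> RR \<Longrightarrow> (\<lambda>z. h1 z * h2 z) \<in> RR"
  by (rule R_mult[OF _ _ cD cF cG])
lemma RR_const: "(\<lambda>z. a) \<in> RR" by (rule rat_sub_R[OF rat_const])

lemma RR_sq: "(\<lambda>z. z ^ 2) \<in> RR"
proof -
  have "\<forall>z\<in>D0. z ^ 2 = (\<lambda>u v. u) (F0 z) (G0 z) / (\<lambda>u v. 1) (F0 z) (G0 z)" by simp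
  moreover have "\<forall>z\<in>D0. (\<lambda>u v. 1::complex) (F0 z) (G0 z) \<noteq> 0" by simp
  ultimately have "(\<lambda>z. z ^ 2) \<in> rat_fun2 F0 G0 D0"
    by (intro rat_fun2_I[OF poly2_u poly2_const[of 1]])
  then show ?thesis by (rule rat_sub_R)
qed

lemma RR_cnj: "cnj \<in> RR"
proof -
  have "\<forall>z\<in>D0. (\<lambda>u v. 1 - v) (F0 z) (G0 z) \<noteq> 0 \<and> cnj z = (\<lambda>u v. v) (F0 z) (G0 z) / (\<lambda>u v. 1 - v) (F0 z) (G0 z)"
  proof
    fix z assume z: "z \<in> D0"
    have nz: "1 + cnj z \<noteq> 0" using den_nz[OF z r(2)] .
    have "1 - cnj z / (1 + cnj z) = 1 / (1 + cnj z)" using nz by (simp add: field_simps)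
    then show "(\<lambda>u v. 1 - v) (F0 z) (G0 z) \<noteq> 0 \<and> cnj z = (\<lambda>u v. v) (F0 z) (G0 z) / (\<lambda>u v. 1 - v) (F0 z) (G0 z)"
      using nz by simp
  qed
  moreover have "(\<lambda>u v. 1 - v) \<in> poly2" using poly2_diff[OF poly2_const poly2_v] by simp
  ultimately have "cnj \<in> rat_fun2 F0 G0 D0"
    by (intro rat_fun2_I[OF poly2_v]) auto
  then show ?thesis by (rule rat_sub_R)
qed

lemma RR_norm4: "(\<lambda>z. complex_of_real (cmod z ^ 4)) \<in> RR"
proof -
  have eq: "(\<lambda>z. complex_of_real (cmod z ^ 4)) = (\<lambda>z. z ^ 2 * (cnj z * cnj z))"
  proof
    fix z :: complex
    have "complex_of_real (cmod z ^ 4) = (complex_of_real (cmod z ^ 2))^2" by (simp add: power_mult[symmetric])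
    also have "\<dots> = (z * cnj z)^2" by (simp only: complex_norm_square)
    also have "\<dots> = z ^ 2 * (cnj z * cnj z)" by (simp add: power2_eq_square)
    finally show "complex_of_real (cmod z ^ 4) = z ^ 2 * (cnj z * cnj z)" .
  qed
  show ?thesis unfolding eq by (rule RR_mult[OF RR_sq RR_mult[OF RR_cnj RR_cnj]])
qed

lemma RR_id: "(\<lambda>z. z) \<in> RR"
proof (rule R_closed)
  fix e :: real assume e: "e > 0"
  have e2: "e/2 > 0" using e by simp
  define \<psi> where "\<psi> = (\<lambda>x::real. 1 / max (sqrt x) ((e/2)^2))"
  have mpos: "\<forall>x\<in>{0..1}. max (sqrt x) ((e/2)^2) \<noteq> 0"
    using e by (auto simp: max_def)
  have c\<psi>: "continuous_on {0..1} \<psi>" unfolding \<psi>_def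
    by (intro continuous_on_divide continuous_on_const continuous_on_max continuous_on_real_sqrt
        continuous_on_id mpos)
  obtain q where q: "real_polynomial_function q" "\<And>x. x \<in> {0..1} \<Longrightarrow> \<bar>\<psi> x - q x\<bar> < e/2"
    using Stone_Weierstrass_real_polynomial_function[OF compact_Icc c\<psi> e2] by blast
  have linR: "(\<lambda>z. complex_of_real (l (cmod z ^ 4))) \<in> RR" if l: "bounded_linear l" for l :: "real \<Rightarrow> real"
  proof -
    have lin: "linear l" using l by (rule bounded_linear.linear)
    have lx0: "l x = x * l 1" for x using linear_scale_real[OF lin, of x 1] by simp
    have eq: "(\<lambda>z. complex_of_real (l (cmod z ^ 4))) = (\<lambda>z. complex_of_real (cmod z ^ 4) * complex_of_real (l 1))"
      by (rule ext) (simp only: lx0[of "cmod _ ^ 4"] of_real_mult)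
    show ?thesis unfolding eq by (rule RR_mult[OF RR_norm4 RR_const])
  qed
  have qR: "(\<lambda>z. complex_of_real (q (cmod z ^ 4))) \<in> RR"
    using R_rpf[where u="\<lambda>z. cmod z ^ 4", OF q(1) linR cD cF cG] by simp
  have FR: "(\<lambda>z. z^2 * cnj z * complex_of_real (q (cmod z ^ 4))) \<in> RR"
    by (rule RR_mult[OF RR_mult[OF RR_sq RR_cnj] qR])
  have "\<forall>z\<in>D0. norm (z - z^2 * cnj z * complex_of_real (q (cmod z ^ 4))) < e"
  proof
    fix z assume z: "z \<in> D0"
    define t where "t = cmod z"
    have t: "0 \<le> t" "t \<le> 1/2" using z r by (auto simp: t_def)
    have t1: "t \<le> 1" using t by simp
    have t4: "t^4 \<in> {0..1}" using t t1 by (auto intro: power_le_one)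
    have "sqrt (t^4) = t^2"
      by (rule real_sqrt_unique) simp_all
    then have \<psi>t: "\<psi> (t^4) = 1 / max (t^2) ((e/2)^2)" by (simp add: \<psi>_def)
    have qt: "\<bar>1 / max (t^2) ((e/2)^2) - q (t^4)\<bar> < e/2" using q(2)[OF t4] \<psi>t by simp
    have zc: "z * cnj z = complex_of_real (t^2)" unfolding t_def by (rule complex_norm_square[symmetric])
    have zeq: "z - z^2 * cnj z * complex_of_real (q (t ^ 4)) = z * complex_of_real (1 - t^2 * q (t^4))"
    proof -
      have "z^2 * cnj z = z * complex_of_real (t^2)" using zc by (simp add: power2_eq_square mult.assoc)
      then show ?thesis by (simp add: algebra_simps)
    qed
    have "norm (z - z^2 * cnj z * complex_of_real (q (t ^ 4))) = t * \<bar>1 - t^2 * q (t^4)\<bar>"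
      by (subst zeq) (simp only: norm_mult norm_of_real t_def[symmetric])
    also have "\<dots> < e" by (rule real_key[OF t e qt])
    finally show "norm (z - z^2 * cnj z * complex_of_real (q (cmod z ^ 4))) < e" by (simp add: t_def)
  qed
  then show "\<exists>F\<in>RR. \<forall>z\<in>D0. norm (z - F z) < e"
    by (rule bexI[OF _ FR])
qed

lemma RR_Re: "(\<lambda>z. complex_of_real (Re z)) \<in> RR"
proof -
  have eq: "(\<lambda>z. complex_of_real (Re z)) = (\<lambda>z. z * (1/2) + cnj z * (1/2))"
    by (simp add: fun_eq_iff complex_eq_iff)
  show ?thesis unfolding eq
    by (rule RR_add[OF RR_mult[OF RR_id RR_const[of "1/2"]] RR_mult[OF RR_cnj RR_const[of "1/2"]]])
qed

lemma RR_Im: "(\<lambda>z. complex_of_real (Im z)) \<in> RR"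
proof -
  have eq: "(\<lambda>z. complex_of_real (Im z)) = (\<lambda>z. z * (-\<i>/2) + cnj z * (\<i>/2))"
    by (simp add: fun_eq_iff complex_eq_iff)
  show ?thesis unfolding eq
    by (rule RR_add[OF RR_mult[OF RR_id RR_const[of "-\<i>/2"]] RR_mult[OF RR_cnj RR_const[of "\<i>/2"]]])
qed

lemma RR_lin:
  assumes l: "bounded_linear (l :: complex \<Rightarrow> real)"
  shows "(\<lambda>z. complex_of_real (l z)) \<in> RR"
proof -
  have lz0: "l z = Re z * l 1 + Im z * l \<i>" for z
  proof -
    have "z = Re z *\<^sub>R 1 + Im z *\<^sub>R \<i>" by (simp add: complex_eq_iff)
    then have "l z = l (Re z *\<^sub>R 1 + Im z *\<^sub>R \<i>)" by simp
    also have "\<dots> = Re z * l 1 + Im z * l \<i>"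
      using l by (simp add: linear_add[OF bounded_linear.linear[OF l]] linear_scale[OF bounded_linear.linear[OF l]])
    finally show ?thesis .
  qed
  obtain a b where lz: "\<And>z. l z = Re z * a + Im z * b" using lz0 by blast
  have eq: "(\<lambda>z. complex_of_real (l z)) = (\<lambda>z. complex_of_real (Re z) * complex_of_real a
      + complex_of_real (Im z) * complex_of_real b)"
    by (simp add: fun_eq_iff lz)
  show ?thesis unfolding eq
    by (rule RR_add[OF RR_mult[OF RR_Re RR_const] RR_mult[OF RR_Im RR_const]])
qed

lemma RR_rpf: "real_polynomial_function p \<Longrightarrow> (\<lambda>z. complex_of_real (p z)) \<in> RR"
  using R_rpf[where u="\<lambda>z. z", OF _ RR_lin cD cF cG] by simp

lemma RR_cont:
  assumes h: "continuous_on D0 h"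
  shows "h \<in> RR"
proof (rule R_closed)
  fix e :: real assume e: "e > 0"
  have e2: "e/2 > 0" using e by simp
  have c1: "continuous_on D0 (\<lambda>z. Re (h z))" using h by (intro continuous_intros)
  have c2: "continuous_on D0 (\<lambda>z. Im (h z))" using h by (intro continuous_intros)
  obtain p1 where p1: "real_polynomial_function p1" "\<And>x. x \<in> D0 \<Longrightarrow> \<bar>Re (h x) - p1 x\<bar> < e/2"
    using Stone_Weierstrass_real_polynomial_function[OF cD c1 e2] by blast
  obtain p2 where p2: "real_polynomial_function p2" "\<And>x. x \<in> D0 \<Longrightarrow> \<bar>Im (h x) - p2 x\<bar> < e/2"
    using Stone_Weierstrass_real_polynomial_function[OF cD c2 e2] by blast
  have FR: "(\<lambda>z. complex_of_real (p1 z) + complex_of_real (p2 z) * \<i>) \<in> RR"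
    by (rule RR_add[OF RR_rpf[OF p1(1)] RR_mult[OF RR_rpf[OF p2(1)] RR_const]])
  have "\<forall>z\<in>D0. norm (h z - (complex_of_real (p1 z) + complex_of_real (p2 z) * \<i>)) < e"
  proof
    fix z assume z: "z \<in> D0"
    have "norm (h z - (complex_of_real (p1 z) + complex_of_real (p2 z) * \<i>))
       \<le> \<bar>Re (h z - (complex_of_real (p1 z) + complex_of_real (p2 z) * \<i>))\<bar>
         + \<bar>Im (h z - (complex_of_real (p1 z) + complex_of_real (p2 z) * \<i>))\<bar>"
      by (rule cmod_le)
    also have "\<dots> = \<bar>Re (h z) - p1 z\<bar> + \<bar>Im (h z) - p2 z\<bar>" by simp
    also have "\<dots> < e" using p1(2)[OF z] p2(2)[OF z] by linarith
    finally show "norm (h z - (complex_of_real (p1 z) + complex_of_real (p2 z) * \<i>)) < e" .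
  qed
  then show "\<exists>F\<in>RR. \<forall>z\<in>D0. norm (h z - F z) < e"
    by (rule bexI[OF _ FR])
qed

lemma RR_eq: "RR = C_alg D0"
proof (rule set_eqI)
  fix h
  show "h \<in> RR \<longleftrightarrow> h \<in> C_alg D0"
  proof
    assume "h \<in> RR"
    then show "h \<in> C_alg D0" unfolding C_alg_def using R_cont[OF _ cF cG] by blast
  next
    assume "h \<in> C_alg D0"
    then show "h \<in> RR" unfolding C_alg_def using RR_cont by blast
  qed
qed

end

theorem theorem1p1:
  shows "\<exists>r0>0. \<forall>r. 0 < r \<and> r \<le> r0 \<longrightarrow>
     R_alg (\<lambda>z. z ^ 2) (\<lambda>z. cnj z / (1 + cnj z)) (cball 0 r) = C_alg (cball 0 r)"
proof (rule exI[of _ "1/2"], intro conjI allI impI)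
  show "(0::real) < 1/2" by simp
  fix r :: real assume "0 < r \<and> r \<le> 1/2"
  then show "R_alg (\<lambda>z. z ^ 2) (\<lambda>z. cnj z / (1 + cnj z)) (cball 0 r) = C_alg (cball 0 r)"
    using RR_eq by blast
qed

end
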